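(* Let $A,A'\in\mathbb{C}^{n\times n}$ with $\|A\|_F=\|A'\|_F=1$, let $v,v'\in\mathbb{C}^n$ be nonzero, and let $\lambda,\lambda'\in\mathbb{C}$ be such that $Av=\lambda v$. Suppose that $\mu(A,\lambda,v)\,\mathrm{dist}((A,\lambda,v),(A',\lambda',v'))\le\frac{\varepsilon}{12.5}$ for some $0<\varepsilon<0.37$. Then $\frac{1}{1+\varepsilon}\mu(A,\lambda,v)\le\mu(A',\lambda',v')\le(1+\varepsilon)\mu(A,\lambda,v)$.
   Context: $\|\cdot\|_F$ is the Frobenius norm. For $v\ne0$, $T_v=\{x\in\mathbb{C}^n:\langle x,v\rangle=0\}$, $P_{v^\perp}$ the orthogonal projection onto $T_v$, $A_{\lambda,v}=P_{v^\perp}(A-\lambda\mathrm{Id})|_{T_v}:T_v\to T_v$, and $\mu(A,\lambda,v)=\|A\|_F\|A_{\lambda,v}^{-1}\|$ (operator norm), with $\mu=\infty$ if $A_{\lambda,v}$ is not invertible. $d_{\mathbb{P}}(v,v')=\arccos(|\langle v,v'\rangle|/(\|v\|\|v'\|))$. For nonzero $A,A'$: $\mathrm{dist}((A,\lambda,v),(A',\lambda',v'))^2=\|\frac{A}{\|A\|_F}-\frac{A'}{\|A'\|_F}\|_F^2+|\frac{\lambda}{\|A\|_F}-\frac{\lambda'}{\|A'\|_F}|^2+d_{\mathbb{P}}(v,v')^2$. *)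

theory Defs
  imports "HOL-Analysis.Analysis" "HOL-Library.Extended_Real"
begin

definition cinner :: "complex^'n \<Rightarrow> complex^'n \<Rightarrow> complex" where
  "cinner x y = (\<Sum>i\<in>UNIV. x$i * cnj (y$i))"

definition fro :: "complex^'n^'n \<Rightarrow> real" where
  "fro A = sqrt (\<Sum>i\<in>UNIV. \<Sum>j\<in>UNIV. (cmod (A$i$j))\<^sup>2)"

definition Tperp :: "complex^'n \<Rightarrow> (complex^'n) set" where
  "Tperp v = {x. cinner x v = 0}"

definition proj_perp :: "complex^'n \<Rightarrow> complex^'n \<Rightarrow> complex^'n" where
  "proj_perp v x = x - (cinner x v / cinner v v) *s v"

text \<open>A_{lambda,v} = P_{v perp} (A - lambda Id), considered on T_v.\<close>
definition Alv :: "complex^'n^'n \<Rightarrow> complex \<Rightarrow> complex^'n \<Rightarrow> complex^'n \<Rightarrow> complex^'n" where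
  "Alv A l v x = proj_perp v ((A - mat l) *v x)"

definition opnorm_on :: "(complex^'n) set \<Rightarrow> (complex^'n \<Rightarrow> complex^'n) \<Rightarrow> real" where
  "opnorm_on S g = Sup {norm (g y) | y. y \<in> S \<and> norm y \<le> 1}"

definition mu :: "complex^'n^'n \<Rightarrow> complex \<Rightarrow> complex^'n \<Rightarrow> ereal" where
  "mu A l v =
     (if bij_betw (Alv A l v) (Tperp v) (Tperp v)
      then ereal (fro A * opnorm_on (Tperp v) (the_inv_into (Tperp v) (Alv A l v)))
      else \<infinity>)"

definition dP :: "complex^'n \<Rightarrow> complex^'n \<Rightarrow> real" where
  "dP v v' = arccos (cmod (cinner v v') / (norm v * norm v'))"

text \<open>Distance between triples (A nonzero).\<close>
definition tdist :: "complex^'n^'n \<Rightarrow> complex \<Rightarrow> complex^'n \<Rightarrow>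
                     complex^'n^'n \<Rightarrow> complex \<Rightarrow> complex^'n \<Rightarrow> real" where
  "tdist A l v A' l' v' = sqrt (
     (sqrt (\<Sum>i\<in>UNIV. \<Sum>j\<in>UNIV. (cmod ((A$i$j) / complex_of_real (fro A)
                                         - (A'$i$j) / complex_of_real (fro A')))\<^sup>2))\<^sup>2
     + (cmod (l / complex_of_real (fro A) - l' / complex_of_real (fro A')))\<^sup>2
     + (dP v v')\<^sup>2)"

end

theory Submission
  imports Defs
begin


lemma inj_surj_subspace: fixes f :: "'a::euclidean_space \<Rightarrow> 'a" assumes "linear f" "subspace S" "f ` S \<subseteq> S" "inj_on f S" shows "f ` S = S"
proof -
  have "dim (f ` S) = dim S" using dim_image_eq[OF assms(1), of S] assms(2,4) span_eq_iff by metis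
  moreover have "subspace (f ` S)" using assms linear_subspace_image by blast
  ultimately show ?thesis using subspace_dim_equal assms by (metis order_refl)
qed

lemma cinner_add_left: "cinner (x + y) z = cinner x z + cinner y z"
  by (simp add: cinner_def distrib_right sum.distrib)
lemma cinner_diff_left: "cinner (x - y) z = cinner x z - cinner y z"
  by (simp add: cinner_def left_diff_distrib sum_subtractf)
lemma cinner_scale_left: "cinner (c *s x) z = c * cinner x z"
  by (simp add: cinner_def sum_distrib_left mult.assoc)
lemma cinner_commute: "cinner y x = cnj (cinner x y)"
  by (simp add: cinner_def mult.commute)
lemma cinner_add_right: "cinner z (x + y) = cinner z x + cinner z y"
  by (simp add: cinner_def distrib_left sum.distrib)
lemma cinner_diff_right: "cinner z (x - y) = cinner z x - cinner z y"
  by (simp add: cinner_def right_diff_distrib sum_subtractf)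
lemma cinner_scale_right: "cinner z (c *s x) = cnj c * cinner z x"
  by (simp add: cinner_def sum_distrib_left mult.assoc mult.left_commute)
lemma cinner_zero_left[simp]: "cinner 0 x = 0" by (simp add: cinner_def)
lemma cinner_zero_right[simp]: "cinner x 0 = 0" by (simp add: cinner_def)

lemma norm_sq_vec: "(norm (x::complex^'n))\<^sup>2 = (\<Sum>i\<in>UNIV. (cmod (x$i))\<^sup>2)"
  by (simp add: norm_vec_def L2_set_def sum_nonneg)

lemma cinner_self: "cinner x x = complex_of_real ((norm x)\<^sup>2)"
proof -
  have "\<And>i. x$i * cnj (x$i) = complex_of_real ((cmod (x$i))\<^sup>2)" by (metis complex_norm_square)
  thus ?thesis by (simp add: norm_sq_vec cinner_def)
qed

lemma cinner_cs: "cmod (cinner x y) \<le> norm x * norm y"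
proof -
  have "cmod (cinner x y) \<le> (\<Sum>i\<in>UNIV. cmod (x$i * cnj (y$i)))"
    unfolding cinner_def by (rule norm_sum)
  also have "\<dots> = (\<Sum>i\<in>UNIV. \<bar>cmod (x$i)\<bar> * \<bar>cmod (y$i)\<bar>)" by (simp add: norm_mult)
  also have "\<dots> \<le> L2_set (\<lambda>i. cmod (x$i)) UNIV * L2_set (\<lambda>i. cmod (y$i)) UNIV"
    by (rule L2_set_mult_ineq)
  finally show ?thesis by (simp add: norm_vec_def)
qed

lemma norm_sq_add: "(norm (x + y))\<^sup>2 = (norm x)\<^sup>2 + (norm y)\<^sup>2 + 2 * Re (cinner x y)"
proof -
  have "complex_of_real ((norm (x+y))\<^sup>2) = cinner (x+y) (x+y)" by (simp add: cinner_self)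
  also have "\<dots> = cinner x x + cinner y y + (cinner x y + cnj (cinner x y))"
    by (simp add: cinner_add_left cinner_add_right cinner_commute[of x y])
  finally have "complex_of_real ((norm (x+y))\<^sup>2) = of_real ((norm x)\<^sup>2 + (norm y)\<^sup>2 + 2 * Re (cinner x y))"
    by (simp add: cinner_self complex_add_cnj)
  thus ?thesis using of_real_eq_iff by blast
qed

lemma norm_scale: "norm (c *s (x::complex^'n)) = cmod c * norm x"
proof -
  have "(norm (c *s x))\<^sup>2 = (cmod c * norm x)\<^sup>2"
    by (simp add: norm_sq_vec power_mult_distrib norm_mult sum_distrib_left)
  thus ?thesis by (simp add: power2_eq_iff_nonneg)
qed

lemma scaleR_as_s: "r *\<^sub>R (x::complex^'n) = complex_of_real r *s x"
  unfolding vec_eq_iff vector_scaleR_component vector_smult_component by (simp add: scaleR_conv_of_real)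

lemma cinner_self_pos: "v \<noteq> 0 \<Longrightarrow> cinner v v \<noteq> 0"
  by (simp add: cinner_self)

lemma proj_orth: "v \<noteq> 0 \<Longrightarrow> cinner (proj_perp v x) v = 0"
  by (simp add: proj_perp_def cinner_diff_left cinner_scale_left cinner_self_pos)

lemma proj_in: "v \<noteq> 0 \<Longrightarrow> proj_perp v x \<in> Tperp v"
  by (simp add: Tperp_def proj_orth)

lemma proj_of_orth: "cinner y v = 0 \<Longrightarrow> proj_perp v y = y"
  by (simp add: proj_perp_def)

lemma proj_diff: "proj_perp v (x - y) = proj_perp v x - proj_perp v y"
  by (simp add: proj_perp_def cinner_diff_left vec_eq_iff diff_divide_distrib algebra_simps)

lemma proj_add: "proj_perp v (x + y) = proj_perp v x + proj_perp v y"
  by (simp add: proj_perp_def cinner_add_left vec_eq_iff add_divide_distrib algebra_simps)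

lemma proj_scale: "proj_perp v (c *s x) = c *s proj_perp v x"
  by (simp add: proj_perp_def cinner_scale_left vec_eq_iff algebra_simps)

lemma proj_unit: "norm v = 1 \<Longrightarrow> proj_perp v x = x - cinner x v *s v"
  by (simp add: proj_perp_def cinner_self)

lemma decomp_unit: "norm v = 1 \<Longrightarrow> x = proj_perp v x + cinner x v *s v"
  by (simp add: proj_unit)

lemma pyth_unit: assumes "norm v = 1"
  shows "(norm x)\<^sup>2 = (norm (proj_perp v x))\<^sup>2 + (cmod (cinner x v))\<^sup>2"
proof -
  have v0: "v \<noteq> 0" using assms by auto
  have "(norm x)\<^sup>2 = (norm (proj_perp v x + cinner x v *s v))\<^sup>2"
    using decomp_unit[OF assms, of x] by simp
  also have "\<dots> = (norm (proj_perp v x))\<^sup>2 + (cmod (cinner x v))\<^sup>2"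
    by (simp add: norm_sq_add cinner_scale_right proj_orth[OF v0] norm_scale assms)
  finally show ?thesis .
qed

lemma proj_le: "norm v = 1 \<Longrightarrow> norm (proj_perp v x) \<le> norm x"
  using pyth_unit[of v x] by (metis abs_norm_cancel le_add_same_cancel1 real_le_rsqrt real_sqrt_abs zero_le_power2)

lemma cinner_le_unit: "norm v = 1 \<Longrightarrow> cmod (cinner x v) \<le> norm x"
  using cinner_cs[of x v] by simp

lemma proj_lower:
  assumes "norm v = 1" "norm v' = 1"
  shows "norm (proj_perp v' w) - norm w * norm (proj_perp v' v) \<le> norm (proj_perp v w)"
proof -
  have "proj_perp v' (proj_perp v w) = proj_perp v' w - cinner w v *s proj_perp v' v"
    by (simp add: proj_unit[OF assms(1)] proj_diff proj_scale)
  hence "norm (proj_perp v' w) - norm (cinner w v *s proj_perp v' v) \<le> norm (proj_perp v' (proj_perp v w))"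
    by (metis norm_triangle_ineq2)
  also have "\<dots> \<le> norm (proj_perp v w)" by (rule proj_le[OF assms(2)])
  finally have 1: "norm (proj_perp v' w) - cmod (cinner w v) * norm (proj_perp v' v) \<le> norm (proj_perp v w)"
    by (simp add: norm_scale)
  have "cmod (cinner w v) * norm (proj_perp v' v) \<le> norm w * norm (proj_perp v' v)"
    by (simp add: cinner_le_unit[OF assms(1)] mult_right_mono)
  thus ?thesis using 1 by linarith
qed

lemma inner_small:
  assumes "norm v' = 1" "cinner y v' = 0"
  shows "cmod (cinner y v) \<le> norm y * norm (proj_perp v' v)"
proof -
  have "cinner y v = cinner y (proj_perp v' v + cinner v v' *s v')"
    using decomp_unit[OF assms(1), of v] by simp
  also have "\<dots> = cinner y (proj_perp v' v)"
    by (simp add: cinner_add_right cinner_scale_right assms(2))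
  finally show ?thesis using cinner_cs by simp
qed

lemma s_sym:
  assumes "norm v = 1" "norm v' = 1"
  shows "norm (proj_perp v v') = norm (proj_perp v' v)"
proof -
  have e1: "(norm (proj_perp v v'))\<^sup>2 + (cmod (cinner v' v))\<^sup>2 = 1"
    using pyth_unit[OF assms(1), of v'] assms by simp
  have e2: "(norm (proj_perp v' v))\<^sup>2 + (cmod (cinner v' v))\<^sup>2 = 1"
    using pyth_unit[OF assms(2), of v] assms cinner_commute[of v v'] by simp
  have "(norm (proj_perp v v'))\<^sup>2 = (norm (proj_perp v' v))\<^sup>2" using e1 e2 by linarith
  thus ?thesis by (simp add: power2_eq_iff_nonneg)
qed

lemma s_formula:
  assumes "norm v = 1" "norm v' = 1"
  shows "norm (proj_perp v' v) = sqrt (1 - (cmod (cinner v v'))\<^sup>2)"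
proof -
  have "(norm (proj_perp v' v))\<^sup>2 = 1 - (cmod (cinner v v'))\<^sup>2"
    using pyth_unit[OF assms(2), of v] assms by simp
  thus ?thesis by (metis norm_ge_zero real_sqrt_unique)
qed

lemma mat_l_apply: "mat l *v (x::complex^'n) = l *s x"
  apply (vector matrix_vector_mult_def mat_def)
  apply (simp add: if_distrib if_distribR cong del: if_weak_cong)
  done

lemma matdiff_apply: "((A::complex^'n^'n) - B) *v x = A *v x - B *v x"
  by (simp add: vec_eq_iff matrix_vector_mult_def sum_subtractf left_diff_distrib)

lemma mat_diff_apply: "((A::complex^'n^'n) - mat l) *v x = A *v x - l *s x"
  by (simp add: matdiff_apply mat_l_apply)

lemma mat_scale: "(A::complex^'n^'n) *v (c *s x) = c *s (A *v x)"
  by (simp add: vec_eq_iff matrix_vector_mult_def sum_distrib_left mult.left_commute)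

lemma mat_addv: "(A::complex^'n^'n) *v (x + y) = A *v x + A *v y"
  by (simp add: vec_eq_iff matrix_vector_mult_def sum.distrib distrib_left)

lemma mat_diffv: "(A::complex^'n^'n) *v (x - y) = A *v x - A *v y"
  by (simp add: vec_eq_iff matrix_vector_mult_def sum_subtractf right_diff_distrib)

lemma fro_bound: "norm ((A::complex^'n^'n) *v x) \<le> fro A * norm x"
proof -
  have row: "(cmod ((A *v x)$i))\<^sup>2 \<le> (\<Sum>j\<in>UNIV. (cmod (A$i$j))\<^sup>2) * (norm x)\<^sup>2" for i
  proof -
    have "cmod ((A *v x)$i) \<le> (\<Sum>j\<in>UNIV. cmod (A$i$j * x$j))"
      unfolding matrix_vector_mult_def by (simp add: norm_sum)
    also have "\<dots> = (\<Sum>j\<in>UNIV. \<bar>cmod (A$i$j)\<bar> * \<bar>cmod (x$j)\<bar>)" by (simp add: norm_mult)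
    also have "\<dots> \<le> L2_set (\<lambda>j. cmod (A$i$j)) UNIV * L2_set (\<lambda>j. cmod (x$j)) UNIV"
      by (rule L2_set_mult_ineq)
    finally have "cmod ((A *v x)$i) \<le> L2_set (\<lambda>j. cmod (A$i$j)) UNIV * norm x"
      by (simp add: norm_vec_def)
    hence "(cmod ((A *v x)$i))\<^sup>2 \<le> (L2_set (\<lambda>j. cmod (A$i$j)) UNIV * norm x)\<^sup>2"
      by (simp add: power_mono)
    thus ?thesis by (simp add: power_mult_distrib L2_set_def sum_nonneg)
  qed
  have "(norm (A *v x))\<^sup>2 \<le> (\<Sum>i\<in>UNIV. (\<Sum>j\<in>UNIV. (cmod (A$i$j))\<^sup>2) * (norm x)\<^sup>2)"
    unfolding norm_sq_vec[of "A *v x"] by (rule sum_mono[OF row])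
  also have "\<dots> = (\<Sum>i\<in>UNIV. (\<Sum>j\<in>UNIV. (cmod (A$i$j))\<^sup>2)) * (norm x)\<^sup>2"
    by (rule sum_distrib_right[symmetric])
  also have "(\<Sum>i\<in>UNIV. (\<Sum>j\<in>UNIV. (cmod (A$i$j))\<^sup>2)) = (fro A)\<^sup>2"
    unfolding fro_def by (rule real_sqrt_pow2[symmetric]) (simp add: sum_nonneg)
  also have "(fro A)\<^sup>2 * (norm x)\<^sup>2 = (fro A * norm x)\<^sup>2" by (simp add: power_mult_distrib)
  finally have sq: "(norm (A *v x))\<^sup>2 \<le> (fro A * norm x)\<^sup>2" .
  have "0 \<le> fro A * norm x" by (simp add: fro_def sum_nonneg)
  show ?thesis by (rule power2_le_imp_le[OF sq \<open>0 \<le> fro A * norm x\<close>])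
qed

lemma Tperp_subspace: "subspace (Tperp v)"
  unfolding subspace_def Tperp_def
  by (simp add: cinner_add_left scaleR_as_s cinner_scale_left)

lemma Alv_linear: "linear (Alv A l v)"
  by (rule linearI) (simp_all add: Alv_def mat_addv proj_add scaleR_as_s mat_scale proj_scale)

lemma Alv_into: "v \<noteq> 0 \<Longrightarrow> Alv A l v ` Tperp v \<subseteq> Tperp v"
  by (auto simp: Alv_def proj_in)

lemma bound_bij:
  fixes f :: "complex^'n \<Rightarrow> complex^'n"
  assumes lin: "linear f" and sub: "subspace S" and into: "f ` S \<subseteq> S" and C: "0 \<le> C"
    and bnd: "\<forall>y\<in>S. norm y \<le> C * norm (f y)"
  shows "bij_betw f S S \<and> opnorm_on S (the_inv_into S f) \<le> C"
proof -
  have inj: "inj_on f S"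
  proof (rule inj_onI)
    fix x y assume xy: "x\<in>S" "y\<in>S" "f x = f y"
    hence "x - y \<in> S" "f (x - y) = 0" using sub lin by (auto simp: subspace_diff linear_diff)
    hence "norm (x-y) \<le> 0" using bnd by fastforce
    thus "x = y" by simp
  qed
  have surj: "f ` S = S" by (rule inj_surj_subspace[OF lin sub into inj])
  have bij: "bij_betw f S S" using inj surj by (simp add: bij_betw_def)
  have "opnorm_on S (the_inv_into S f) \<le> C"
    unfolding opnorm_on_def
  proof (rule cSup_least)
    have "0 \<in> S" by (rule subspace_0[OF sub])
    thus "{norm (the_inv_into S f y) |y. y \<in> S \<and> norm y \<le> 1} \<noteq> {}"
      by force
    fix r assume "r \<in> {norm (the_inv_into S f y) |y. y \<in> S \<and> norm y \<le> 1}"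
    then obtain y where y: "y\<in>S" "norm y \<le> 1" "r = norm (the_inv_into S f y)" by blast
    have gy: "the_inv_into S f y \<in> S" using the_inv_into_into[OF inj] surj y(1) by auto
    have fgy: "f (the_inv_into S f y) = y" using f_the_inv_into_f[OF inj] surj y(1) by auto
    have "norm (the_inv_into S f y) \<le> C * norm (f (the_inv_into S f y))" using bnd gy by blast
    hence "r \<le> C * norm y" using fgy y(3) by simp
    also have "\<dots> \<le> C" using C y(2) by (simp add: mult_left_le)
    finally show "r \<le> C" .
  qed
  thus ?thesis using bij by simp
qed

lemma bij_bound:
  fixes f :: "complex^'n \<Rightarrow> complex^'n"
  assumes lin: "linear f" and sub: "subspace S" and bij: "bij_betw f S S"
  shows "0 \<le> opnorm_on S (the_inv_into S f) \<and>
         (\<forall>y\<in>S. norm y \<le> opnorm_on S (the_inv_into S f) * norm (f y))"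
proof -
  have inj: "inj_on f S" and surj: "f ` S = S" using bij by (auto simp: bij_betw_def)
  have spanS: "span S = S" using sub by (simp add: span_eq_iff)
  obtain h where h: "linear h" "\<forall>x\<in>S. h (f x) = x"
    using linear_inj_on_left_inverse[OF lin, of S] inj spanS by auto
  have "bounded_linear h" using h(1) linear_conv_bounded_linear by blast
  then obtain K where K: "\<And>x. norm (h x) \<le> norm x * K"
    using bounded_linear.bounded by blast
  have lowK: "norm y \<le> norm (f y) * K" if "y \<in> S" for y using K[of "f y"] h(2) that by simp
  define g where "g = the_inv_into S f"
  define Q where "Q = {norm (g y) |y. y \<in> S \<and> norm y \<le> 1}"
  have gS: "g z \<in> S" and fg: "f (g z) = z" if "z \<in> S" for z
    using the_inv_into_into[OF inj] f_the_inv_into_f[OF inj] surj that by (auto simp: g_def)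
  have bdd: "bdd_above Q"
  proof (rule bdd_aboveI)
    fix r assume "r \<in> Q"
    then obtain z where z: "z \<in> S" "norm z \<le> 1" "r = norm (g z)" by (auto simp: Q_def)
    have "r \<le> norm z * K" using lowK[OF gS[OF z(1)]] fg[OF z(1)] z(3) by simp
    also have "\<dots> \<le> norm z * \<bar>K\<bar>" by (rule mult_left_mono) auto
    also have "\<dots> \<le> \<bar>K\<bar>" using z(2) by (simp add: mult_left_le_one_le)
    finally show "r \<le> \<bar>K\<bar>" .
  qed
  have M: "opnorm_on S g = Sup Q" by (simp add: opnorm_on_def Q_def)
  have "0 \<in> S" using sub by (rule subspace_0)
  hence "norm (g 0) \<in> Q" unfolding Q_def by force
  hence "norm (g 0) \<le> Sup Q" by (rule cSup_upper[OF _ bdd])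
  hence M0: "0 \<le> Sup Q" by (rule order_trans[OF norm_ge_zero])
  have "norm y \<le> Sup Q * norm (f y)" if y: "y \<in> S" for y
  proof (cases "f y = 0")
    case True thus ?thesis using lowK[OF y] by simp
  next
    case False
    define n where "n = norm (f y)"
    have n: "n > 0" using False by (simp add: n_def)
    define z where "z = (1/n) *\<^sub>R f y"
    have fy: "f y \<in> S" using y surj by auto
    have zS: "z \<in> S" using fy sub by (simp add: z_def subspace_scale)
    have nz: "norm z = 1" using n by (simp add: z_def n_def)
    have "f ((1/n) *\<^sub>R y) = z" by (simp add: z_def linear_scale[OF lin])
    moreover have "(1/n) *\<^sub>R y \<in> S" using y sub by (simp add: subspace_scale)
    ultimately have gz: "g z = (1/n) *\<^sub>R y" unfolding g_def by (metis the_inv_into_f_f[OF inj])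
    have "norm (g z) \<in> Q" using zS nz by (auto simp: Q_def)
    hence "norm (g z) \<le> Sup Q" using cSup_upper[OF _ bdd] by blast
    hence "norm y / n \<le> Sup Q" using gz n by simp
    thus ?thesis using n by (simp add: n_def divide_le_eq mult.commute)
  qed
  thus ?thesis using M M0 by (simp add: g_def)
qed

lemma num1: fixes t \<epsilon> K :: real assumes "0 \<le> t" "t = \<epsilon> / 12.5" "\<epsilon> < 0.37" "1 - 6*t - 2*t^2 \<le> K"
  shows "0 < K \<and> 1 \<le> (1+\<epsilon>)*K"
proof -
  have e: "\<epsilon> = 25/2 * t" using assms(2) by simp
  have e3: "\<epsilon> < 37/100" using assms(3) by simp
  have t: "t < 37/1250" using e3 e by linarith
  have "t * t \<le> (37/1250) * t" by (rule mult_right_mono) (use t assms(1) in linarith)+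
  hence t2: "t^2 \<le> (37/1250) * t" by (simp only: power2_eq_square)
  have "(1+\<epsilon>)*(1 - 6*t - 2*t^2) \<le> (1+\<epsilon>)*K" by (rule mult_left_mono) (use assms e in linarith)+
  moreover have "0 \<le> t * ((13/2) - 77*t - 25*t^2)" by (rule mult_nonneg_nonneg) (use t t2 assms(1) in linarith)+
  moreover have "(1+\<epsilon>)*(1 - 6*t - 2*t^2) = 1 + t * ((13/2) - 77*t - 25*t^2)"
    unfolding e by (simp add: algebra_simps power2_eq_square)
  moreover have "0 < K" using t t2 assms(1,4) by linarith
  ultimately show ?thesis by linarith
qed
lemma num2: fixes t \<epsilon> K :: real assumes "0 \<le> t" "t = \<epsilon> / 12.5" "\<epsilon> < 0.37"
   "1 - 2*t - (1+\<epsilon>)*(4*t + 4*t^2) \<le> K"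
  shows "0 < K \<and> 1 \<le> (1+\<epsilon>)*K"
proof -
  have e: "\<epsilon> = 25/2 * t" using assms(2) by simp
  have e3: "\<epsilon> < 37/100" using assms(3) by simp
  have t: "t < 37/1250" using e3 e by linarith
  have "t * t \<le> (37/1250) * t" by (rule mult_right_mono) (use t assms(1) in linarith)+
  hence t2: "t^2 \<le> (37/1250) * t" by (simp only: power2_eq_square)
  have "(1+\<epsilon>)*(1 - 2*t - (1+\<epsilon>)*(4*t + 4*t^2)) \<le> (1+\<epsilon>)*K"
    by (rule mult_left_mono) (use assms e in linarith)+
  moreover have "(1+\<epsilon>)*(1 - 2*t - (1+\<epsilon>)*(4*t + 4*t^2)) = 1 + t*((13/2) - 129*t - 725*t^2 - 625*t^3)"
    unfolding e by (simp add: algebra_simps power2_eq_square power3_eq_cube)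
  moreover have t22: "t^2 \<le> (37/1250)^2" by (rule power_mono) (use t assms(1) in linarith)+
  moreover have t3: "t^3 \<le> (37/1250)^3" by (rule power_mono) (use t assms(1) in linarith)+
  moreover have c3: "(37/1250::real)^3 \<le> 1/10000" and c2: "(37/1250::real)^2 \<le> 1/1000" by (simp_all add: power3_eq_cube power2_eq_square)
  moreover have "0 \<le> t*((13/2) - 129*t - 725*t^2 - 625*t^3)"
    by (rule mult_nonneg_nonneg) (use t t22 t3 assms(1) calculation in linarith)+
  moreover have "(1+\<epsilon>)*(4*t + 4*t^2) \<le> (137/100) * (4*(37/1250) + 4/1000)"
    by (rule mult_mono) (use t t22 c2 e3 e assms(1) zero_le_power2[of t] in linarith)+
  hence hX: "(1+\<epsilon>)*(4*t + 4*t^2) \<le> 1/5" by simp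
  note all = calculation
  have gen: "\<And>X. X \<le> 1/5 \<Longrightarrow> 1 - 2*t - X \<le> K \<Longrightarrow> 0 < K" using t by linarith
  have "0 < K" by (rule gen[OF hX assms(4)])
  moreover have "1 \<le> (1+\<epsilon>)*K" using all by linarith
  ultimately show ?thesis by simp
qed
lemma Tperp_scale: "k \<noteq> 0 \<Longrightarrow> Tperp (k *s v) = Tperp v"
  by (simp add: Tperp_def cinner_scale_right)

lemma proj_scale_vec: "k \<noteq> 0 \<Longrightarrow> proj_perp (k *s v) = proj_perp v"
proof
  fix x assume k: "k \<noteq> 0"
  have ck: "cnj k \<noteq> 0" using k by simp
  show "proj_perp (k *s v) x = proj_perp v x"
  proof (cases "cinner v v = 0")
    case True thus ?thesis by (simp add: proj_perp_def cinner_scale_left cinner_scale_right)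
  next
    case False
    have "cinner x (k *s v) / cinner (k *s v) (k *s v) * k = cinner x v / cinner v v"
      using k ck False by (simp add: cinner_scale_left cinner_scale_right field_simps)
    thus ?thesis by (simp add: proj_perp_def vector_smult_assoc)
  qed
qed

lemma Alv_scale: "k \<noteq> 0 \<Longrightarrow> Alv A l (k *s v) = Alv A l v"
  by (simp add: Alv_def proj_scale_vec fun_eq_iff)

lemma mu_scale: "k \<noteq> 0 \<Longrightarrow> mu A l (k *s v) = mu A l v"
  by (simp add: mu_def Alv_scale Tperp_scale)

lemma dP_scale: "k \<noteq> 0 \<Longrightarrow> k' \<noteq> 0 \<Longrightarrow> dP (k *s v) (k' *s v') = dP v v'"
  by (simp add: dP_def cinner_scale_left cinner_scale_right norm_scale norm_mult)

lemma tdist_scale: "k \<noteq> 0 \<Longrightarrow> k' \<noteq> 0 \<Longrightarrow> tdist A l (k *s v) A' l' (k' *s v') = tdist A l v A' l' v'"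
  by (simp add: tdist_def dP_scale)

lemma gA_bound: assumes "fro A = 1" shows "norm ((A - mat l) *v x) \<le> (1 + cmod l) * norm x"
proof -
  have "norm ((A - mat l) *v x) \<le> norm (A *v x) + norm (l *s x)"
    unfolding mat_diff_apply by (rule norm_triangle_ineq4)
  also have "\<dots> \<le> norm x + cmod l * norm x" using fro_bound[of A x] assms by (simp add: norm_scale)
  finally show ?thesis by (simp add: algebra_simps)
qed



lemma fro_nonneg: "0 \<le> fro A" by (simp add: fro_def sum_nonneg)

lemma part1_core:
  fixes A A' :: "complex^'n^'n" and v v' y' :: "complex^'n"
  assumes nv: "norm v = 1" and nv': "norm v' = 1" and fA': "fro A' = 1"
    and eig: "A *v v = l *s v" and y': "cinner y' v' = 0"
    and low: "\<forall>y\<in>Tperp v. norm y \<le> M * norm (Alv A l v y)" and M0: "0 \<le> M"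
    and lb: "cmod l' \<le> 1 + b" and bdef: "b = cmod (l - l')" and adef: "a = fro (A - A')"
    and sdef: "s = norm (proj_perp v' v)"
  shows "(1 - s - M*(a + b + s*(2+b))) * norm y' \<le> M * norm (Alv A' l' v' y')"
proof -
  define y where "y = proj_perp v y'"
  define k where "k = cinner y' v"
  have v0: "v \<noteq> 0" using nv by auto
  have s0: "0 \<le> s" by (simp add: sdef)
  have yT: "y \<in> Tperp v" by (simp add: y_def proj_in v0)
  have hy: "y = y' - k *s v" by (simp add: y_def k_def proj_unit[OF nv])
  have i1: "cmod k \<le> norm y' * s" using inner_small[OF nv' y', of v] by (simp add: k_def sdef)
  have ny: "norm y' - norm y' * s \<le> norm y"
  proof -
    have "norm y' - norm (k *s v) \<le> norm (y' - k *s v)" by (rule norm_triangle_ineq2)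
    thus ?thesis using i1 hy nv by (simp add: norm_scale)
  qed
  define w where "w = (A - mat l) *v y'"
  define w' where "w' = (A' - mat l') *v y'"
  have Av: "(A - mat l) *v v = 0" using eig by (simp add: mat_diff_apply)
  have Wy: "(A - mat l) *v y = w" by (simp add: hy w_def mat_diffv mat_scale Av)
  have fy: "Alv A l v y = proj_perp v w" by (simp add: Alv_def Wy)
  have fy': "Alv A' l' v' y' = proj_perp v' w'" by (simp add: Alv_def w'_def)
  have sv: "norm (proj_perp v v') = s" using s_sym[OF nv nv'] sdef by simp
  have p1: "norm (proj_perp v w') - norm w' * s \<le> norm (proj_perp v' w')"
    using proj_lower[OF nv' nv, of w'] sv by simp
  have p2: "norm (proj_perp v w) - norm (w' - w) \<le> norm (proj_perp v w')"
  proof -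
    have "proj_perp v w' - proj_perp v w = proj_perp v (w' - w)" by (simp add: proj_diff)
    hence "norm (proj_perp v w' - proj_perp v w) \<le> norm (w' - w)" using proj_le[OF nv] by metis
    moreover have "norm (proj_perp v w) - norm (proj_perp v w') \<le> norm (proj_perp v w - proj_perp v w')"
      by (rule norm_triangle_ineq2)
    moreover have "norm (proj_perp v w - proj_perp v w') = norm (proj_perp v w' - proj_perp v w)"
      by (rule norm_minus_commute)
    ultimately show ?thesis by linarith
  qed
  have p3: "norm (w' - w) \<le> (a + b) * norm y'"
  proof -
    have "w - w' = (A - A') *v y' - (l - l') *s y'"
      by (simp add: w_def w'_def mat_diff_apply matdiff_apply mat_l_apply vec_eq_iff algebra_simps)
    hence "norm (w - w') \<le> norm ((A - A') *v y') + norm ((l - l') *s y')"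
      using norm_triangle_ineq4 by metis
    also have "\<dots> \<le> a * norm y' + b * norm y'"
    proof (rule add_mono)
      show "norm ((A - A') *v y') \<le> a * norm y'" using fro_bound[of "A - A'" y'] by (simp add: adef)
      show "norm ((l - l') *s y') \<le> b * norm y'" by (simp only: norm_scale bdef order_refl)
    qed
    finally show ?thesis by (simp add: norm_minus_commute algebra_simps)
  qed
  have p4: "norm w' \<le> (2 + b) * norm y'"
  proof -
    have "norm w' \<le> (1 + cmod l') * norm y'" unfolding w'_def by (rule gA_bound[OF fA'])
    also have "\<dots> \<le> (2 + b) * norm y'" by (rule mult_right_mono) (use lb in auto)
    finally show ?thesis .
  qed
  have p5: "norm y \<le> M * norm (proj_perp v w)" using low yT fy by metis
  have p4s: "norm w' * s \<le> (2 + b) * norm y' * s" using p4 s0 by (rule mult_right_mono)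
  have q: "norm (proj_perp v w) - (a+b)*norm y' - (2+b)*norm y' * s \<le> norm (proj_perp v' w')"
    using p1 p2 p3 p4s by linarith
  have qM: "M * (norm (proj_perp v w) - (a+b)*norm y' - (2+b)*norm y' * s) \<le> M * norm (proj_perp v' w')"
    using q M0 by (rule mult_left_mono)
  have e1: "M * (norm (proj_perp v w) - (a+b)*norm y' - (2+b)*norm y' * s)
     = M * norm (proj_perp v w) - M*((a+b)*norm y') - M*((2+b)*norm y' * s)" by (simp add: algebra_simps)
  have e2: "(1 - s - M*(a + b + s*(2+b))) * norm y'
     = norm y' - norm y' * s - M*((a+b)*norm y') - M*((2+b)*norm y' * s)" by (simp add: algebra_simps)
  have "(1 - s - M*(a + b + s*(2+b))) * norm y' \<le> M * norm (proj_perp v' w')"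
    using qM e1 e2 p5 ny by linarith
  thus ?thesis using fy' by simp
qed

lemma part2_core:
  fixes A A' :: "complex^'n^'n" and v v' y :: "complex^'n"
  assumes nv: "norm v = 1" and nv': "norm v' = 1" and fA: "fro A = 1"
    and eig: "A *v v = l *s v" and y: "cinner y v = 0"
    and low': "\<forall>y'\<in>Tperp v'. norm y' \<le> M' * norm (Alv A' l' v' y')" and M0: "0 \<le> M'"
    and ln: "cmod l \<le> 1" and bdef: "b = cmod (l - l')" and adef: "a = fro (A - A')"
    and sdef: "s = norm (proj_perp v' v)"
  shows "(1 - s - M'*(a + b + 2 * s + 2 * s^2)) * norm y \<le> M' * norm (Alv A l v y)"
proof -
  define y' where "y' = proj_perp v' y"
  define k where "k = cinner y v'"
  have v0: "v' \<noteq> 0" using nv' by auto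
  have s0: "0 \<le> s" by (simp add: sdef)
  have a0: "0 \<le> a" by (simp add: adef fro_nonneg)
  have b0: "0 \<le> b" by (simp add: bdef)
  have sv: "norm (proj_perp v v') = s" using s_sym[OF nv nv'] sdef by simp
  have yT: "y' \<in> Tperp v'" by (simp add: y'_def proj_in v0)
  have hy: "y' = y - k *s v'" by (simp add: y'_def k_def proj_unit[OF nv'])
  have i1: "cmod k \<le> norm y * s" using inner_small[OF nv y, of v'] by (simp add: k_def sv)
  have ny: "norm y - norm y * s \<le> norm y'"
  proof -
    have "norm y - norm (k *s v') \<le> norm (y - k *s v')" by (rule norm_triangle_ineq2)
    thus ?thesis using i1 hy nv' by (simp add: norm_scale)
  qed
  have nyle: "norm y' \<le> norm y" unfolding y'_def by (rule proj_le[OF nv'])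
  define w where "w = (A - mat l) *v y"
  define w' where "w' = (A' - mat l') *v y'"
  have Av: "(A - mat l) *v v = 0" using eig by (simp add: mat_diff_apply)
  have fy: "Alv A l v y = proj_perp v w" by (simp add: Alv_def w_def)
  have fy': "Alv A' l' v' y' = proj_perp v' w'" by (simp add: Alv_def w'_def)
  have q1: "norm (proj_perp v' w) - norm w * s \<le> norm (proj_perp v w)"
    using proj_lower[OF nv nv', of w] sdef by simp
  have q2: "norm (proj_perp v' w') - norm (w' - w) \<le> norm (proj_perp v' w)"
  proof -
    have "proj_perp v' w' - proj_perp v' w = proj_perp v' (w' - w)" by (simp add: proj_diff)
    hence "norm (proj_perp v' w' - proj_perp v' w) \<le> norm (w' - w)" using proj_le[OF nv'] by metis
    moreover have "norm (proj_perp v' w') - norm (proj_perp v' w) \<le> norm (proj_perp v' w' - proj_perp v' w)"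
      by (rule norm_triangle_ineq2)
    ultimately show ?thesis by linarith
  qed
  have Av': "norm ((A - mat l) *v v') \<le> 2 * s"
  proof -
    have "v' = proj_perp v v' + cinner v' v *s v" by (rule decomp_unit[OF nv])
    hence "(A - mat l) *v v' = (A - mat l) *v proj_perp v v'"
      by (metis Av mat_addv mat_scale add.right_neutral vector_smult_rzero)
    also have "norm \<dots> \<le> (1 + cmod l) * norm (proj_perp v v')" by (rule gA_bound[OF fA])
    also have "\<dots> \<le> 2 * s" using ln sv s0 by (simp add: mult_right_mono)
    finally show ?thesis .
  qed
  have q3: "norm (w' - w) \<le> (a + b) * norm y + 2 * s^2 * norm y"
  proof -
    have "w - w' = ((A - A') *v y' - (l - l') *s y') + k *s ((A - mat l) *v v')"
    proof -
      have "w = (A - mat l) *v y' + k *s ((A - mat l) *v v')"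
        by (simp add: w_def hy mat_diffv mat_scale)
      thus ?thesis by (simp add: w'_def mat_diff_apply matdiff_apply mat_l_apply vec_eq_iff algebra_simps)
    qed
    hence "norm (w - w') \<le> norm ((A - A') *v y' - (l - l') *s y') + norm (k *s ((A - mat l) *v v'))"
      using norm_triangle_ineq by metis
    also have "\<dots> \<le> (norm ((A - A') *v y') + norm ((l - l') *s y')) + cmod k * (2 * s)"
    proof (rule add_mono)
      show "norm ((A - A') *v y' - (l - l') *s y') \<le> norm ((A - A') *v y') + norm ((l - l') *s y')"
        by (rule norm_triangle_ineq4)
      show "norm (k *s ((A - mat l) *v v')) \<le> cmod k * (2 * s)"
        unfolding norm_scale by (rule mult_left_mono[OF Av' norm_ge_zero])
    qed
    also have "\<dots> \<le> (a * norm y' + b * norm y') + cmod k * (2 * s)"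
    proof (intro add_mono order_refl)
      show "norm ((A - A') *v y') \<le> a * norm y'" using fro_bound[of "A - A'" y'] by (simp add: adef)
      show "norm ((l - l') *s y') \<le> b * norm y'" by (simp only: norm_scale bdef order_refl)
    qed
    also have "\<dots> \<le> (a * norm y + b * norm y) + norm y * s * (2 * s)"
      using nyle a0 b0 i1 s0 by (intro add_mono mult_left_mono mult_right_mono) auto
    finally show ?thesis by (simp add: norm_minus_commute algebra_simps power2_eq_square)
  qed
  have q4: "norm w \<le> 2 * norm y"
  proof -
    have "norm w \<le> (1 + cmod l) * norm y" unfolding w_def by (rule gA_bound[OF fA])
    also have "\<dots> \<le> 2 * norm y" by (rule mult_right_mono) (use ln in auto)
    finally show ?thesis .
  qed
  have q5: "norm y' \<le> M' * norm (proj_perp v' w')" using low' yT fy' by metis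
  have q4s: "norm w * s \<le> 2 * norm y * s" using q4 s0 by (rule mult_right_mono)
  have q: "norm (proj_perp v' w') - ((a + b) * norm y + 2 * s^2 * norm y) - 2 * norm y * s \<le> norm (proj_perp v w)"
    using q1 q2 q3 q4s by linarith
  have qM: "M' * (norm (proj_perp v' w') - ((a + b) * norm y + 2 * s^2 * norm y) - 2 * norm y * s)
     \<le> M' * norm (proj_perp v w)" using q M0 by (rule mult_left_mono)
  have e1: "M' * (norm (proj_perp v' w') - ((a + b) * norm y + 2 * s^2 * norm y) - 2 * norm y * s)
     = M' * norm (proj_perp v' w') - M' * ((a + b) * norm y + 2 * s^2 * norm y) - M' * (2 * norm y * s)"
    by (simp add: algebra_simps)
  have e2: "(1 - s - M'*(a + b + 2 * s + 2 * s^2)) * norm y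
     = norm y - norm y * s - M' * ((a + b) * norm y + 2 * s^2 * norm y) - M' * (2 * norm y * s)"
    by (simp add: algebra_simps)
  have "(1 - s - M'*(a + b + 2 * s + 2 * s^2)) * norm y \<le> M' * norm (proj_perp v w)"
    using qM e1 e2 q5 ny by linarith
  thus ?thesis using fy by simp
qed



lemma main_unit:
  fixes A A' :: "complex^'n^'n" and v v' :: "complex^'n" and l l' :: complex and \<epsilon> :: real
  assumes fA: "fro A = 1" and fA': "fro A' = 1" and nv: "norm v = 1" and nv': "norm v' = 1"
    and eig: "A *v v = l *s v" and e0: "0 < \<epsilon>" and e1: "\<epsilon> < 0.37"
    and hyp: "mu A l v * ereal (tdist A l v A' l' v') \<le> ereal (\<epsilon> / 12.5)"
  shows "ereal (1 / (1 + \<epsilon>)) * mu A l v \<le> mu A' l' v'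
         \<and> mu A' l' v' \<le> ereal (1 + \<epsilon>) * mu A l v"
proof -
  define a where "a = fro (A - A')"
  define b where "b = cmod (l - l')"
  define c where "c = cmod (cinner v v')"
  define \<theta> where "\<theta> = arccos c"
  define s where "s = norm (proj_perp v' v)"
  define d where "d = tdist A l v A' l' v'"
  define t where "t = \<epsilon> / 12.5"
  define T where "T = Tperp v"
  define T' where "T' = Tperp v'"
  define f where "f = Alv A l v"
  define f' where "f' = Alv A' l' v'"
  have v0: "v \<noteq> 0" and v'0: "v' \<noteq> 0" using nv nv' by auto
  have c1: "c \<le> 1" using cinner_cs[of v v'] nv nv' by (simp add: c_def)
  have c0: "0 \<le> c" by (simp add: c_def)
  have dPeq: "dP v v' = \<theta>" by (simp add: dP_def \<theta>_def c_def nv nv')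
  have s_eq: "s = sqrt (1 - c\<^sup>2)" using s_formula[OF nv nv'] by (simp add: s_def c_def)
  have s_sin: "s = sin \<theta>" using sin_arccos[of c] c0 c1 s_eq by (simp add: \<theta>_def)
  have \<theta>0: "0 \<le> \<theta>" using arccos_lbound[of c] c0 c1 by (simp add: \<theta>_def)
  have s\<theta>: "s \<le> \<theta>" using s_sin sin_x_le_x[OF \<theta>0] by simp
  have s0: "0 \<le> s" by (simp add: s_def)
  have a0: "0 \<le> a" by (simp add: a_def fro_nonneg)
  have b0: "0 \<le> b" by (simp add: b_def)
  have sv: "norm (proj_perp v v') = s" using s_sym[OF nv nv'] by (simp add: s_def)
  have d_eq: "d = sqrt (a\<^sup>2 + b\<^sup>2 + \<theta>\<^sup>2)"
  proof -
    have "(\<Sum>i\<in>UNIV. \<Sum>j\<in>UNIV. (cmod (A$i$j - A'$i$j))\<^sup>2) = a\<^sup>2"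
      by (simp add: a_def fro_def sum_nonneg)
    thus ?thesis by (simp add: d_def tdist_def fA fA' b_def dPeq sum_nonneg)
  qed
  have ad: "a \<le> d" unfolding d_eq by (rule real_le_rsqrt) simp
  have bd: "b \<le> d" unfolding d_eq by (rule real_le_rsqrt) simp
  have \<theta>d: "\<theta> \<le> d" unfolding d_eq by (rule real_le_rsqrt) simp
  have d0: "0 \<le> d" by (simp add: d_eq)
  have ln: "cmod l \<le> 1"
  proof -
    have "norm (A *v v) \<le> 1" using fro_bound[of A v] fA nv by simp
    thus ?thesis using eig nv by (simp add: norm_scale)
  qed
  have lb: "cmod l' \<le> 1 + b"
  proof -
    have "cmod l' - cmod l \<le> cmod (l' - l)" by (rule norm_triangle_ineq2)
    thus ?thesis using ln by (simp add: b_def norm_minus_commute)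
  qed
  have subT: "subspace T" and subT': "subspace T'" by (simp_all add: T_def T'_def Tperp_subspace)
  have linf: "linear f" and linf': "linear f'" by (simp_all add: f_def f'_def Alv_linear)
  have intof: "f ` T \<subseteq> T" and intof': "f' ` T' \<subseteq> T'"
    using Alv_into v0 v'0 by (simp_all add: f_def f'_def T_def T'_def)
  have mu_A: "mu A l v = (if bij_betw f T T then ereal (opnorm_on T (the_inv_into T f)) else \<infinity>)"
    by (simp add: mu_def fA f_def T_def)
  have mu_A': "mu A' l' v' = (if bij_betw f' T' T' then ereal (opnorm_on T' (the_inv_into T' f')) else \<infinity>)"
    by (simp add: mu_def fA' f'_def T'_def)
  show ?thesis
  proof (cases "bij_betw f T T")
    case False
    hence muinf: "mu A l v = \<infinity>" using mu_A by simp
    have "d = 0"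
    proof (rule ccontr)
      assume "d \<noteq> 0" hence "d > 0" using d0 by simp
      hence inf: "mu A l v * ereal d = \<infinity>" using muinf by simp
      have "mu A l v * ereal d \<le> ereal (\<epsilon>/12.5)" using hyp unfolding d_def .
      thus False using inf by simp
    qed
    hence a00: "a = 0" and b00: "b = 0" and th0: "\<theta> = 0" using ad bd \<theta>d a0 b0 \<theta>0 by auto
    have "c = 1" using th0 arccos_eq_0_iff[of c] c0 c1 by (simp add: \<theta>_def)
    hence "s = 0" by (simp add: s_eq)
    hence pv: "proj_perp v v' = 0" using sv by simp
    define k where "k = cinner v' v"
    have v'eq: "v' = k *s v" using decomp_unit[OF nv, of v'] pv by (simp add: k_def)
    have k0: "k \<noteq> 0" using v'0 v'eq by auto
    have TT: "T' = T" by (simp add: T_def T'_def v'eq Tperp_scale k0)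
    have ll: "l' = l" using b00 by (simp add: b_def)
    have AA: "A' *v x = A *v x" for x
    proof -
      have "norm ((A - A') *v x) \<le> 0" using fro_bound[of "A - A'" x] a00 by (simp add: a_def)
      thus ?thesis by (simp add: matdiff_apply)
    qed
    have ff: "f' = f"
    proof
      fix x
      have "f' x = Alv A' l' v x" by (simp add: f'_def v'eq Alv_scale k0)
      also have "\<dots> = f x" by (simp add: Alv_def f_def mat_diff_apply AA ll)
      finally show "f' x = f x" .
    qed
    have "mu A' l' v' = mu A l v" using mu_A mu_A' TT ff by simp
    thus ?thesis using muinf e0 by simp
  next
    case True
    define M where "M = opnorm_on T (the_inv_into T f)"
    have muA: "mu A l v = ereal M" using mu_A True by (simp add: M_def)
    have M0: "0 \<le> M" and low: "\<forall>y\<in>T. norm y \<le> M * norm (f y)"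
      using bij_bound[OF linf subT True] by (simp_all add: M_def)
    have Md: "M * d \<le> t" using hyp muA by (simp add: d_def t_def)
    have t0: "0 \<le> t" using e0 by (simp add: t_def)
    have fbound: "norm (f y) \<le> 2 * norm y" for y
    proof -
      have "norm (f y) \<le> norm ((A - mat l) *v y)" by (simp add: f_def Alv_def proj_le[OF nv])
      also have "\<dots> \<le> (1 + cmod l) * norm y" by (rule gA_bound[OF fA])
      also have "\<dots> \<le> 2 * norm y" by (rule mult_right_mono) (use ln in auto)
      finally show ?thesis .
    qed
    show ?thesis
    proof (cases "\<exists>y0\<in>T. y0 \<noteq> 0")
      case False
      hence T0: "\<forall>y\<in>T. y = 0" by auto
      have allv: "x = cinner x v *s v" for x
      proof -
        have "proj_perp v x \<in> T" by (simp add: T_def proj_in v0)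
        hence "proj_perp v x = 0" using T0 by auto
        thus ?thesis using decomp_unit[OF nv, of x] by simp
      qed
      define k where "k = cinner v' v"
      have k0: "k \<noteq> 0" using allv[of v'] v'0 by (auto simp: k_def)
      have cvv: "cinner v v = 1" using nv by (simp add: cinner_self)
      have T'0: "\<forall>y\<in>T'. y = 0"
      proof
        fix y assume "y \<in> T'"
        hence "cinner y v' = 0" by (simp add: T'_def Tperp_def)
        hence "cinner (cinner y v *s v) (k *s v) = 0" using allv[of y] allv[of v'] by (simp add: k_def)
        hence "cinner y v * cnj k = 0" by (simp add: cinner_scale_left cinner_scale_right cvv mult.commute)
        hence "cinner y v = 0" using k0 by simp
        thus "y = 0" using allv[of y] by simp
      qed
      have bT: "\<forall>y\<in>T. norm y \<le> 0 * norm (f y)" using T0 by simp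
      have bT': "\<forall>y\<in>T'. norm y \<le> 0 * norm (f' y)" using T'0 by simp
      have "M \<le> 0" using bound_bij[OF linf subT intof order_refl bT] by (simp add: M_def)
      hence M00: "M = 0" using M0 by simp
      have bij': "bij_betw f' T' T'" and "opnorm_on T' (the_inv_into T' f') \<le> 0"
        using bound_bij[OF linf' subT' intof' order_refl bT'] by auto
      moreover have "0 \<le> opnorm_on T' (the_inv_into T' f')" using bij_bound[OF linf' subT' bij'] by simp
      ultimately have "mu A' l' v' = ereal 0" using mu_A' by simp
      thus ?thesis using muA M00 by (simp add: zero_ereal_def)
    next
      case True
      then obtain y0 where y0: "y0 \<in> T" "y0 \<noteq> 0" by auto
      have "norm y0 \<le> M * norm (f y0)" using low y0 by simp
      also have "\<dots> \<le> M * (2 * norm y0)" by (rule mult_left_mono[OF fbound M0])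
      finally have "1 \<le> 2 * M" using y0(2) by (simp add: mult.commute mult.left_commute)
      hence "1 * d \<le> (2 * M) * d" using d0 by (rule mult_right_mono)
      hence d2t: "d \<le> 2 * t" using Md by simp
      have Ma: "M * a \<le> t" using mult_left_mono[OF ad M0] Md by linarith
      have Mb: "M * b \<le> t" using mult_left_mono[OF bd M0] Md by linarith
      have Ms: "M * s \<le> t" using mult_left_mono[OF order_trans[OF s\<theta> \<theta>d] M0] Md by linarith
      have s2t: "s \<le> 2 * t" and b2t: "b \<le> 2 * t" using s\<theta> \<theta>d bd d2t by linarith+
      have Ms0: "0 \<le> M * s" using M0 s0 by simp
      define K1 where "K1 = 1 - s - M*(a + b + s*(2+b))"
      have "M * s * b \<le> t * (2 * t)" by (rule mult_mono[OF Ms b2t t0 b0])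
      hence "1 - 6*t - 2*t^2 \<le> K1"
        using Ma Mb Ms s2t by (simp add: K1_def algebra_simps power2_eq_square)
      hence K1p: "0 < K1" and K1e: "1 \<le> (1+\<epsilon>)*K1" using num1[OF t0 t_def e1] by auto
      have bnd1: "\<forall>y'\<in>T'. norm y' \<le> (M/K1) * norm (f' y')"
      proof
        fix y' assume "y' \<in> T'"
        hence "cinner y' v' = 0" by (simp add: T'_def Tperp_def)
        hence "K1 * norm y' \<le> M * norm (f' y')"
          using part1_core[OF nv nv' fA' eig _ _ M0 lb b_def a_def s_def] low
          by (simp add: K1_def f'_def f_def T_def)
        thus "norm y' \<le> (M/K1) * norm (f' y')" using K1p by (simp add: field_simps)
      qed
      have MK1: "0 \<le> M/K1" using M0 K1p by simp
      have bij': "bij_betw f' T' T'" and M'le: "opnorm_on T' (the_inv_into T' f') \<le> M/K1"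
        using bound_bij[OF linf' subT' intof' MK1 bnd1] by auto
      define M' where "M' = opnorm_on T' (the_inv_into T' f')"
      have muA': "mu A' l' v' = ereal M'" using mu_A' bij' by (simp add: M'_def)
      have "M/K1 \<le> (1+\<epsilon>)*M"
      proof -
        have "M \<le> ((1+\<epsilon>)*M) * K1" using mult_left_mono[OF K1e M0] by (simp add: algebra_simps)
        thus ?thesis using K1p by (simp add: divide_le_eq)
      qed
      hence M'up: "M' \<le> (1+\<epsilon>)*M" using M'le by (simp add: M'_def)
      have M'0: "0 \<le> M'" and low': "\<forall>y'\<in>T'. norm y' \<le> M' * norm (f' y')"
        using bij_bound[OF linf' subT' bij'] by (simp_all add: M'_def)
      define X where "X = a + b + 2 * s + 2 * s^2"
      have X0: "0 \<le> X" using a0 b0 s0 by (simp add: X_def)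
      define K2 where "K2 = 1 - s - M'*X"
      have "M * s * s \<le> t * (2 * t)" by (rule mult_mono[OF Ms s2t t0 s0])
      hence MX: "M * X \<le> 4*t + 4*t^2" using Ma Mb Ms by (simp add: X_def algebra_simps power2_eq_square)
      have "M' * X \<le> ((1+\<epsilon>)*M) * X" by (rule mult_right_mono[OF M'up X0])
      also have "\<dots> \<le> (1+\<epsilon>) * (4*t + 4*t^2)"
        using mult_left_mono[OF MX, of "1+\<epsilon>"] e0 by (simp add: algebra_simps)
      finally have "1 - 2*t - (1+\<epsilon>)*(4*t + 4*t^2) \<le> K2" using s2t by (simp add: K2_def)
      hence K2p: "0 < K2" and K2e: "1 \<le> (1+\<epsilon>)*K2" using num2[OF t0 t_def e1] by auto
      have bnd2: "\<forall>y\<in>T. norm y \<le> (M'/K2) * norm (f y)"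
      proof
        fix y assume "y \<in> T"
        hence "cinner y v = 0" by (simp add: T_def Tperp_def)
        hence "K2 * norm y \<le> M' * norm (f y)"
          using part2_core[OF nv nv' fA eig _ _ M'0 ln b_def a_def s_def] low'
          by (simp add: K2_def X_def f'_def f_def T'_def)
        thus "norm y \<le> (M'/K2) * norm (f y)" using K2p by (simp add: field_simps)
      qed
      have MK2: "0 \<le> M'/K2" using M'0 K2p by simp
      have "M \<le> M'/K2" using bound_bij[OF linf subT intof MK2 bnd2] by (simp add: M_def)
      also have "M'/K2 \<le> (1+\<epsilon>)*M'"
      proof -
        have "M' \<le> ((1+\<epsilon>)*M') * K2" using mult_left_mono[OF K2e M'0] by (simp add: algebra_simps)
        thus ?thesis using K2p by (simp add: divide_le_eq)
      qed
      finally have Mup: "M \<le> (1+\<epsilon>)*M'" .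
      have g1: "M / (1+\<epsilon>) \<le> M'" using Mup e0 by (simp add: divide_le_eq mult.commute)
      show ?thesis using muA muA' g1 M'up by simp
    qed
  qed
qed



theorem theorem2p9:
  fixes A A' :: "complex^'n^'n" and v v' :: "complex^'n" and l l' :: complex and \<epsilon> :: real
  assumes "fro A = 1" and "fro A' = 1"
    and "v \<noteq> 0" and "v' \<noteq> 0"
    and "A *v v = l *s v"
    and "0 < \<epsilon>" and "\<epsilon> < 0.37"
    and "mu A l v * ereal (tdist A l v A' l' v') \<le> ereal (\<epsilon> / 12.5)"
  shows "ereal (1 / (1 + \<epsilon>)) * mu A l v \<le> mu A' l' v'
         \<and> mu A' l' v' \<le> ereal (1 + \<epsilon>) * mu A l v"
proof -
  define k where "k = complex_of_real (1/norm v)"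
  define k' where "k' = complex_of_real (1/norm v')"
  have k0: "k \<noteq> 0" and k'0: "k' \<noteq> 0" using assms(3,4) by (simp_all add: k_def k'_def)
  have nu: "norm (k *s v) = 1" and nu': "norm (k' *s v') = 1"
    using assms(3,4) by (simp_all add: k_def k'_def norm_scale norm_divide)
  have eig: "A *v (k *s v) = l *s (k *s v)"
    by (simp add: mat_scale assms(5) vector_smult_assoc mult.commute)
  have m1: "mu A l (k *s v) = mu A l v" by (rule mu_scale[OF k0])
  have m2: "mu A' l' (k' *s v') = mu A' l' v'" by (rule mu_scale[OF k'0])
  have td: "tdist A l (k *s v) A' l' (k' *s v') = tdist A l v A' l' v'" by (rule tdist_scale[OF k0 k'0])
  have H: "mu A l (k *s v) * ereal (tdist A l (k *s v) A' l' (k' *s v')) \<le> ereal (\<epsilon> / 12.5)"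
    using assms(8) by (simp only: m1 td)
  show ?thesis
    using main_unit[OF assms(1,2) nu nu' eig assms(6,7) H] by (simp only: m1 m2)
qed


end
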